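(* Let $U\subset\mathbb R^n$ be open, let $X$ be a $C^\infty$ vector field on $U$ and $V:U\to\mathbb R$ a $C^\infty$ function satisfying assumptions A1, A2 and A3$'$ (stated in the context) for some $c>0$. Then every trajectory of $\dot x = X(x)-\nabla V(x)$ starting in $V^{-1}([0,c])$ stays in $V^{-1}([0,c])$ for all $t\ge0$ and converges to the set $V^{-1}(0)$ as $t\to\infty$. Moreover $V^{-1}(0)$ is an invariant set of both $\dot x=X(x)$ and $\dot x = X(x)-\nabla V(x)$.
   Context: Write $x=(x^1,\dots,x^n)$. Assumptions: (A1) $V(x)\ge0$ for all $x\in U$, $V^{-1}(0)\ne\emptyset$, and $\nabla V(x)\cdot X(x)=0$ for all $x\in U$. (A2) $c>0$ is such that $V^{-1}([0,c])$ is a compact subset of $U$. Define $X^0 g=g$, $Xg = X\cdot\nabla g$, $X^k g = X(X^{k-1}g)$ for $k\ge 2$, and $$S=\Big\{x\in U : X^k\tfrac{\partial V}{\partial x^i}(x)=0 \text{ for all } k\ge0,\ 1\le i\le n\Big\}.$$ (A3$'$) $S\cap V^{-1}([0,c])\subset V^{-1}(0)$. *)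

theory Defs
  imports "HOL-Analysis.Analysis"
begin

definition pd :: "'n::finite \<Rightarrow> (real^'n \<Rightarrow> 'b::real_normed_vector) \<Rightarrow> real^'n \<Rightarrow> 'b" where
  "pd i f x = frechet_derivative f (at x) (axis i 1)"

fun Ck_on :: "nat \<Rightarrow> (real^'n::finite) set \<Rightarrow> (real^'n \<Rightarrow> 'b::real_normed_vector) \<Rightarrow> bool" where
  "Ck_on 0 U f = continuous_on U f"
| "Ck_on (Suc k) U f = (f differentiable_on U \<and> (\<forall>i. Ck_on k U (pd i f)))"

definition smooth_on :: "(real^'n::finite) set \<Rightarrow> (real^'n \<Rightarrow> 'b::real_normed_vector) \<Rightarrow> bool" where
  "smooth_on U f = (\<forall>k. Ck_on k U f)"

definition grad :: "(real^'n::finite \<Rightarrow> real) \<Rightarrow> real^'n \<Rightarrow> real^'n" where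
  "grad V x = (\<chi> i. pd i V x)"

definition lie :: "(real^'n::finite \<Rightarrow> real^'n) \<Rightarrow> (real^'n \<Rightarrow> real) \<Rightarrow> real^'n \<Rightarrow> real" where
  "lie X g x = X x \<bullet> grad g x"

definition S_set :: "(real^'n::finite) set \<Rightarrow> (real^'n \<Rightarrow> real^'n) \<Rightarrow> (real^'n \<Rightarrow> real) \<Rightarrow> (real^'n) set" where
  "S_set U X V = {x \<in> U. \<forall>k i. ((lie X ^^ k) (pd i V)) x = 0}"

definition is_solution :: "(real^'n::finite) set \<Rightarrow> (real^'n \<Rightarrow> real^'n) \<Rightarrow> real set \<Rightarrow> (real \<Rightarrow> real^'n) \<Rightarrow> bool" where
  "is_solution U F I phi = (\<forall>t\<in>I. phi t \<in> U \<and> (phi has_vector_derivative F (phi t)) (at t within I))"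

definition invariant_set :: "(real^'n::finite) set \<Rightarrow> (real^'n \<Rightarrow> real^'n) \<Rightarrow> (real^'n) set \<Rightarrow> bool" where
  "invariant_set U F Z = (\<forall>I phi. is_interval I \<and> is_solution U F I phi \<and> (\<exists>t0\<in>I. phi t0 \<in> Z)
      \<longrightarrow> (\<forall>t\<in>I. phi t \<in> Z))"

end

theory Submission
  imports Defs
begin

lemma vec_expand: "(\<Sum>i\<in>UNIV. (v::real^'n)$i *\<^sub>R axis i 1) = v"
  by (simp add: vec_eq_iff sum_component axis_def if_distrib cong: if_cong)

lemma pd_has_derivative:
  fixes f :: "real^'n \<Rightarrow> 'b::real_normed_vector"
  assumes "f differentiable (at y)"
  shows "(f has_derivative (\<lambda>v. \<Sum>i\<in>UNIV. v$i *\<^sub>R pd i f y)) (at y)"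
proof -
  let ?D = "frechet_derivative f (at y)"
  have d: "(f has_derivative ?D) (at y)" using assms frechet_derivative_works by blast
  then have lin: "linear ?D" using has_derivative_linear by blast
  have "?D v = (\<Sum>i\<in>UNIV. v$i *\<^sub>R pd i f y)" for v
  proof -
    have "?D v = ?D (\<Sum>i\<in>UNIV. v$i *\<^sub>R axis i 1)" by (simp add: vec_expand)
    also have "\<dots> = (\<Sum>i\<in>UNIV. v$i *\<^sub>R ?D (axis i 1))"
      using lin by (simp add: linear_sum linear_scale)
    finally show ?thesis by (simp add: pd_def)
  qed
  then have "?D = (\<lambda>v. \<Sum>i\<in>UNIV. v$i *\<^sub>R pd i f y)" by auto
  with d show ?thesis by simp
qed

lemma grad_has_derivative:
  fixes f :: "real^'n \<Rightarrow> real"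
  assumes "f differentiable (at y)"
  shows "(f has_derivative (\<lambda>v. grad f y \<bullet> v)) (at y)"
proof -
  have "(\<lambda>v. \<Sum>i\<in>UNIV. v$i *\<^sub>R pd i f y) = (\<lambda>v. grad f y \<bullet> v)"
    by (auto simp: grad_def inner_vec_def mult.commute)
  with pd_has_derivative[OF assms] show ?thesis by simp
qed

lemma pd_eq: "(f has_derivative D) (at y) \<Longrightarrow> pd i f y = D (axis i 1)"
  unfolding pd_def using frechet_derivative_at by metis

lemma pd_cong:
  assumes "open U" "y \<in> U" "\<And>z. z \<in> U \<Longrightarrow> f z = g z"
  shows "pd i f y = pd i g y"
proof -
  have "(\<lambda>D. (f has_derivative D) (at y)) = (\<lambda>D. (g has_derivative D) (at y))"
  proof (intro ext iffI)
    fix D assume "(f has_derivative D) (at y)"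
    then show "(g has_derivative D) (at y)"
      using has_derivative_transform_within_open[OF _ assms(1,2), of f D UNIV g] assms(3) by simp
  next
    fix D assume "(g has_derivative D) (at y)"
    then show "(f has_derivative D) (at y)"
      using has_derivative_transform_within_open[OF _ assms(1,2), of g D UNIV f] assms(3) by simp
  qed
  then show ?thesis unfolding pd_def frechet_derivative_def by simp
qed

lemma differentiable_on_cong_open:
  assumes "open U" "\<And>z. z \<in> U \<Longrightarrow> f z = g z" "f differentiable_on U"
  shows "g differentiable_on U"
  using assms unfolding differentiable_on_eq_differentiable_at[OF assms(1)] differentiable_def
  using has_derivative_transform_within_open[OF _ assms(1)] by metis

lemma Ck_cong:
  assumes "open U" "\<And>z. z \<in> U \<Longrightarrow> f z = g z"
  shows "Ck_on k U f = Ck_on k U g"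
  using assms(2)
proof (induction k arbitrary: f g)
  case 0
  then show ?case using continuous_on_cong[of U U f g] by simp
next
  case (Suc k)
  have "Ck_on k U (pd i f) = Ck_on k U (pd i g)" for i
    by (rule Suc.IH) (rule pd_cong[OF assms(1)], auto simp: Suc.prems)
  moreover have "(f differentiable_on U) = (g differentiable_on U)"
    using differentiable_on_cong_open[OF assms(1)] Suc.prems by metis
  ultimately show ?case by simp
qed

lemma Ck_cong_trans:
  assumes "open U" "Ck_on k U g" "\<And>z. z \<in> U \<Longrightarrow> f z = g z"
  shows "Ck_on k U f"
  using Ck_cong[OF assms(1), of f g k] assms(2,3) by blast

lemma Ck_mono: "Ck_on (Suc k) U f \<Longrightarrow> Ck_on k U f"
proof (induction k arbitrary: f)
  case 0
  then show ?case by (simp add: differentiable_imp_continuous_on)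
next
  case (Suc k)
  then show ?case by auto
qed

lemma Ck_diff_on: "Ck_on (Suc k) U f \<Longrightarrow> f differentiable_on U" by simp

lemma Ck_cont: "Ck_on k U f \<Longrightarrow> continuous_on U f"
  by (induction k) (auto intro: Ck_mono differentiable_imp_continuous_on)

lemma Ck_diff_at: "open U \<Longrightarrow> Ck_on (Suc k) U f \<Longrightarrow> y \<in> U \<Longrightarrow> f differentiable (at y)"
  using differentiable_on_eq_differentiable_at by auto

lemma fd: "f differentiable (at y) \<Longrightarrow> (f has_derivative (frechet_derivative f (at y))) (at y)"
  using frechet_derivative_works by blast

lemma Ck_const:
  fixes U :: "(real^'n) set" and c :: "'b::real_normed_vector"
  shows "Ck_on k U (\<lambda>_. c)"
proof (induction k arbitrary: c)
  case (Suc k)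
  have "pd i (\<lambda>_::real^'n. c) = (\<lambda>_. 0)" for i
    by (intro ext, subst pd_eq[of _ "\<lambda>_. 0"]) auto
  then show ?case using Suc.IH[of 0] by simp
qed simp

lemma Ck_add:
  fixes f g :: "real^'n \<Rightarrow> 'b::real_normed_vector"
  assumes "open U"
  shows "Ck_on k U f \<Longrightarrow> Ck_on k U g \<Longrightarrow> Ck_on k U (\<lambda>y. f y + g y)"
proof (induction k arbitrary: f g)
  case 0 then show ?case by (auto intro: continuous_on_add)
next
  case (Suc k)
  have "Ck_on k U (pd i (\<lambda>y. f y + g y))" for i
  proof -
    have "Ck_on k U (\<lambda>y. pd i f y + pd i g y)" using Suc by auto
    moreover have "pd i (\<lambda>y. f y + g y) y = pd i f y + pd i g y" if "y \<in> U" for y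
      using pd_eq[OF has_derivative_add[OF fd fd]]
        Ck_diff_at[OF assms Suc.prems(1) that] Ck_diff_at[OF assms Suc.prems(2) that]
      by (simp add: pd_def)
    ultimately show ?thesis by (rule Ck_cong_trans[OF assms])
  qed
  with Suc show ?case by (auto intro: differentiable_on_add)
qed

lemma Ck_diffr:
  fixes f g :: "real^'n \<Rightarrow> 'b::real_normed_vector"
  assumes "open U"
  shows "Ck_on k U f \<Longrightarrow> Ck_on k U g \<Longrightarrow> Ck_on k U (\<lambda>y. f y - g y)"
proof (induction k arbitrary: f g)
  case 0 then show ?case by (auto intro: continuous_on_diff)
next
  case (Suc k)
  have "Ck_on k U (pd i (\<lambda>y. f y - g y))" for i
  proof -
    have "Ck_on k U (\<lambda>y. pd i f y - pd i g y)" using Suc by auto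
    moreover have "pd i (\<lambda>y. f y - g y) y = pd i f y - pd i g y" if "y \<in> U" for y
      using pd_eq[OF has_derivative_diff[OF fd fd]]
        Ck_diff_at[OF assms Suc.prems(1) that] Ck_diff_at[OF assms Suc.prems(2) that]
      by (simp add: pd_def)
    ultimately show ?thesis by (rule Ck_cong_trans[OF assms])
  qed
  with Suc show ?case by (auto intro: differentiable_on_diff)
qed

lemma Ck_mult:
  fixes f g :: "real^'n \<Rightarrow> real"
  assumes "open U"
  shows "Ck_on k U f \<Longrightarrow> Ck_on k U g \<Longrightarrow> Ck_on k U (\<lambda>y. f y * g y)"
proof (induction k arbitrary: f g)
  case 0 then show ?case by (auto intro: continuous_on_mult)
next
  case (Suc k)
  have "Ck_on k U (pd i (\<lambda>y. f y * g y))" for i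
  proof -
    have "Ck_on k U (\<lambda>y. f y * pd i g y + pd i f y * g y)"
    proof (rule Ck_add[OF assms])
      show "Ck_on k U (\<lambda>y. f y * pd i g y)"
        using Suc.IH[of f "pd i g"] Ck_mono[OF Suc.prems(1)] Suc.prems(2) by simp
      show "Ck_on k U (\<lambda>y. pd i f y * g y)"
        using Suc.IH[of "pd i f" g] Ck_mono[OF Suc.prems(2)] Suc.prems(1) by simp
    qed
    moreover have "pd i (\<lambda>y. f y * g y) y = f y * pd i g y + pd i f y * g y" if "y \<in> U" for y
    proof -
      have d1: "(f has_derivative frechet_derivative f (at y)) (at y)"
        using fd Ck_diff_at[OF assms Suc.prems(1) that] by blast
      have d2: "(g has_derivative frechet_derivative g (at y)) (at y)"
        using fd Ck_diff_at[OF assms Suc.prems(2) that] by blast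
      from pd_eq[OF has_derivative_mult[OF d1 d2], of i] show ?thesis unfolding pd_def by simp
    qed
    ultimately show ?thesis by (rule Ck_cong_trans[OF assms])
  qed
  with Suc show ?case by (auto intro: differentiable_on_mult)
qed

lemma Ck_nth:
  fixes f :: "real^'n \<Rightarrow> real^'m"
  assumes "open U"
  shows "Ck_on k U f \<Longrightarrow> Ck_on k U (\<lambda>y. f y $ j)"
proof (induction k arbitrary: f)
  case 0 then show ?case by (auto intro: continuous_on_component)
next
  case (Suc k)
  have "Ck_on k U (pd i (\<lambda>y. f y $ j))" for i
  proof -
    have "Ck_on k U (\<lambda>y. pd i f y $ j)"
      using Suc by auto
    moreover have "pd i (\<lambda>y. f y $ j) y = pd i f y $ j" if "y \<in> U" for y
    proof -
      have d: "(f has_derivative frechet_derivative f (at y)) (at y)"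
        using fd Ck_diff_at[OF assms Suc.prems(1) that] by blast
      have "((\<lambda>y. f y $ j) has_derivative (\<lambda>v. frechet_derivative f (at y) v $ j)) (at y)"
        using bounded_linear.has_derivative[OF bounded_linear_vec_nth d] .
      from pd_eq[OF this, of i] show ?thesis unfolding pd_def by simp
    qed
    ultimately show ?thesis by (rule Ck_cong_trans[OF assms])
  qed
  moreover have "(\<lambda>y. f y $ j) differentiable_on U"
    using Suc.prems unfolding differentiable_on_def differentiable_def
    by (metis Ck_on.simps(2) differentiable_def differentiable_on_def bounded_linear.has_derivative[OF bounded_linear_vec_nth])
  ultimately show ?case by simp
qed

lemma Ck_sum:
  fixes f :: "'i \<Rightarrow> real^'n \<Rightarrow> 'b::real_normed_vector"
  assumes "open U" "finite A"
  shows "(\<And>j. j \<in> A \<Longrightarrow> Ck_on k U (f j)) \<Longrightarrow> Ck_on k U (\<lambda>y. \<Sum>j\<in>A. f j y)"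
  using assms(2)
proof (induction A rule: finite_induct)
  case empty then show ?case using Ck_const[of k U 0] by simp
next
  case (insert x F) then show ?case by (auto intro: Ck_add[OF assms(1)])
qed

lemma smooth_pd: "smooth_on U f \<Longrightarrow> smooth_on U (pd i f)"
  unfolding smooth_on_def by (metis Ck_on.simps(2))

lemma smooth_add: "open U \<Longrightarrow> smooth_on U f \<Longrightarrow> smooth_on U g \<Longrightarrow> smooth_on U (\<lambda>y. f y + g y)"
  unfolding smooth_on_def by (auto intro: Ck_add)
lemma smooth_diff: "open U \<Longrightarrow> smooth_on U f \<Longrightarrow> smooth_on U g \<Longrightarrow> smooth_on U (\<lambda>y. f y - g y)"
  unfolding smooth_on_def by (auto intro: Ck_diffr)
lemma smooth_mult: "open U \<Longrightarrow> smooth_on U (f::real^'n\<Rightarrow>real) \<Longrightarrow> smooth_on U g \<Longrightarrow> smooth_on U (\<lambda>y. f y * g y)"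
  unfolding smooth_on_def by (auto intro: Ck_mult)
lemma smooth_nth: "open U \<Longrightarrow> smooth_on U (f::real^'n\<Rightarrow>real^'m) \<Longrightarrow> smooth_on U (\<lambda>y. f y $ j)"
  unfolding smooth_on_def by (auto intro: Ck_nth)
lemma smooth_sum: "open U \<Longrightarrow> finite A \<Longrightarrow> (\<And>j. j \<in> A \<Longrightarrow> smooth_on U (f j)) \<Longrightarrow> smooth_on U (\<lambda>y. \<Sum>j\<in>A. f j y)"
  unfolding smooth_on_def by (auto intro: Ck_sum)

lemma smooth_lie:
  assumes "open U" "smooth_on U X" "smooth_on U g"
  shows "smooth_on U (lie X g)"
proof -
  have "lie X g = (\<lambda>y. \<Sum>j\<in>UNIV. X y $ j * pd j g y)"
    by (auto simp: lie_def grad_def inner_vec_def)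
  moreover have "smooth_on U (\<lambda>y. \<Sum>j\<in>UNIV. X y $ j * pd j g y)"
    by (intro smooth_sum smooth_mult smooth_nth smooth_pd assms) auto
  ultimately show ?thesis by simp
qed

lemma smooth_lie_iter:
  assumes "open U" "smooth_on U X" "smooth_on U g"
  shows "smooth_on U ((lie X ^^ k) g)"
  by (induction k) (auto intro: smooth_lie assms)

lemma chain_curve:
  fixes g :: "real^'n \<Rightarrow> real"
  assumes "(phi has_vector_derivative w) (at t within I)" "g differentiable (at (phi t))"
  shows "((\<lambda>s. g (phi s)) has_real_derivative (grad g (phi t) \<bullet> w)) (at t within I)"
proof -
  have d1: "(phi has_derivative (\<lambda>h. h *\<^sub>R w)) (at t within I)"
    using assms(1) by (simp add: has_vector_derivative_def)
  have d2: "(g has_derivative (\<lambda>v. grad g (phi t) \<bullet> v)) (at (phi t) within phi ` I)"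
    using grad_has_derivative[OF assms(2)] has_derivative_at_withinI by blast
  have "((g \<circ> phi) has_derivative ((\<lambda>v. grad g (phi t) \<bullet> v) \<circ> (\<lambda>h. h *\<^sub>R w))) (at t within I)"
    by (rule diff_chain_within[OF d1 d2])
  moreover have "((\<lambda>v. grad g (phi t) \<bullet> v) \<circ> (\<lambda>h. h *\<^sub>R w)) = (*) (grad g (phi t) \<bullet> w)"
    by (auto simp: mult.commute)
  ultimately show ?thesis by (simp add: has_field_derivative_def o_def)
qed

lemma deriv_nonpos_mono:
  fixes u :: "real \<Rightarrow> real"
  assumes "{a..b} \<subseteq> I" "a \<le> b"
    and "\<And>t. t \<in> I \<Longrightarrow> (u has_real_derivative D t) (at t within I)"
    and "\<And>t. t \<in> I \<Longrightarrow> D t \<le> 0"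
  shows "u b \<le> u a"
proof -
  have "\<exists>x\<in>{a..b}. u b - u a = (*) (D x) (b - a)"
  proof (rule mvt_very_simple[OF assms(2)])
    fix x assume "a \<le> x" "x \<le> b"
    then have "x \<in> I" using assms(1) by auto
    have "(u has_real_derivative D x) (at x within {a..b})"
      by (rule has_field_derivative_subset[OF assms(3)[OF \<open>x \<in> I\<close>] assms(1)])
    then show "(u has_derivative (*) (D x)) (at x within {a..b})"
      by (simp add: has_field_derivative_def)
  qed
  then obtain x where "x \<in> {a..b}" "u b - u a = (b - a) * D x" by (auto simp: mult.commute)
  moreover have "D x \<le> 0" using assms(1,4) \<open>x \<in> {a..b}\<close> by auto
  ultimately show ?thesis using assms(2) mult_nonneg_nonpos[of "b - a" "D x"] by simp
qed

lemma deriv_bound_lip: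
  fixes u :: "real \<Rightarrow> real"
  assumes "{a..b} \<subseteq> I" "a \<le> b"
    and "\<And>t. t \<in> I \<Longrightarrow> (u has_real_derivative D t) (at t within I)"
    and "\<And>t. t \<in> I \<Longrightarrow> \<bar>D t\<bar> \<le> B"
  shows "\<bar>u b - u a\<bar> \<le> B * (b - a)"
proof -
  have "\<exists>x\<in>{a..b}. u b - u a = (*) (D x) (b - a)"
  proof (rule mvt_very_simple[OF assms(2)])
    fix x assume "a \<le> x" "x \<le> b"
    then have "x \<in> I" using assms(1) by auto
    have "(u has_real_derivative D x) (at x within {a..b})"
      by (rule has_field_derivative_subset[OF assms(3)[OF \<open>x \<in> I\<close>] assms(1)])
    then show "(u has_derivative (*) (D x)) (at x within {a..b})"
      by (simp add: has_field_derivative_def)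
  qed
  then obtain x where "x \<in> {a..b}" "u b - u a = (b - a) * D x" by (auto simp: mult.commute)
  moreover have "\<bar>D x\<bar> \<le> B" using assms(1,4) \<open>x \<in> {a..b}\<close> by auto
  ultimately show ?thesis using assms(2)
    by (simp add: abs_mult mult.commute mult_right_mono)
qed

lemma cont_bound:
  assumes "continuous_on U g" "compact D" "D \<subseteq> U"
  shows "\<exists>B>0. \<forall>y\<in>D. norm (g y) \<le> B"
proof -
  have "compact (g ` D)"
    using compact_continuous_image[OF continuous_on_subset[OF assms(1,3)] assms(2)] .
  then have "bounded (g ` D)" by (rule compact_imp_bounded)
  then show ?thesis unfolding bounded_pos by auto
qed

lemma thick:
  fixes K :: "'a::euclidean_space set"
  assumes "compact K" "open U" "K \<subseteq> U"
  shows "\<exists>\<delta>>0. \<exists>D. compact D \<and> D \<subseteq> U \<and> (\<forall>x\<in>K. cball x \<delta> \<subseteq> D)"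
proof -
  obtain e where e: "e > 0" "(\<Union>x\<in>K. cball x e) \<subseteq> U"
    using compact_subset_open_imp_cball_epsilon_subset[OF assms] by blast
  define D where "D = {x + y | x y. x \<in> K \<and> y \<in> cball 0 e}"
  have "compact D" unfolding D_def by (intro compact_sums assms(1) compact_cball)
  moreover have "D \<subseteq> U"
  proof
    fix z assume "z \<in> D"
    then obtain x y where "z = x + y" "x \<in> K" "y \<in> cball 0 e" unfolding D_def by auto
    then have "z \<in> cball x e" by (auto simp: dist_norm)
    with e \<open>x \<in> K\<close> show "z \<in> U" by blast
  qed
  moreover have "\<forall>x\<in>K. cball x e \<subseteq> D"
  proof (intro ballI subsetI)
    fix x z assume "x \<in> K" "z \<in> cball x e"
    then have "z = x + (z - x)" "z - x \<in> cball 0 e" by (auto simp: dist_norm norm_minus_commute)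
    with \<open>x \<in> K\<close> show "z \<in> D" unfolding D_def by blast
  qed
  ultimately show ?thesis using e(1) by blast
qed

lemma C1_lip:
  fixes f :: "real^'n \<Rightarrow> 'b::real_normed_vector"
  assumes "open U" "Ck_on (Suc 0) U f" "compact D" "D \<subseteq> U"
  shows "\<exists>L\<ge>0. \<forall>C. convex C \<longrightarrow> C \<subseteq> D \<longrightarrow> (\<forall>a\<in>C. \<forall>b\<in>C. norm (f a - f b) \<le> L * norm (a - b))"
proof -
  have "\<forall>i. \<exists>B>0. \<forall>y\<in>D. norm (pd i f y) \<le> B"
  proof
    fix i show "\<exists>B>0. \<forall>y\<in>D. norm (pd i f y) \<le> B"
      using assms(2) cont_bound[OF _ assms(3,4), of "pd i f"] by simp
  qed
  then obtain B where B: "\<And>i. B i > 0" "\<And>i y. y \<in> D \<Longrightarrow> norm (pd i f y) \<le> B i"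
    by metis
  define L where "L = (\<Sum>i\<in>UNIV. B i)"
  have L0: "L \<ge> 0" unfolding L_def using B(1) by (simp add: sum_nonneg less_imp_le)
  have "\<forall>a\<in>C. \<forall>b\<in>C. norm (f a - f b) \<le> L * norm (a - b)" if C: "convex C" "C \<subseteq> D" for C
  proof (intro ballI)
    fix a b assume ab: "a \<in> C" "b \<in> C"
    show "norm (f a - f b) \<le> L * norm (a - b)"
    proof (rule differentiable_bound[OF C(1) _ _ ab])
      fix x assume "x \<in> C"
      then have "x \<in> U" using C(2) assms(4) by auto
      then have "f differentiable (at x)" using Ck_diff_at[OF assms(1,2)] by blast
      from pd_has_derivative[OF this]
      show "(f has_derivative (\<lambda>v. \<Sum>i\<in>UNIV. v$i *\<^sub>R pd i f x)) (at x within C)"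
        by (rule has_derivative_at_withinI)
      show "onorm (\<lambda>v. \<Sum>i\<in>UNIV. v$i *\<^sub>R pd i f x) \<le> L"
      proof (rule onorm_le)
        fix v :: "real^'n"
        have "norm (\<Sum>i\<in>UNIV. v$i *\<^sub>R pd i f x) \<le> (\<Sum>i\<in>UNIV. norm (v$i *\<^sub>R pd i f x))"
          by (rule norm_sum)
        also have "\<dots> \<le> (\<Sum>i\<in>UNIV. norm v * B i)"
        proof (rule sum_mono)
          fix i
          have "norm (v$i *\<^sub>R pd i f x) = \<bar>v$i\<bar> * norm (pd i f x)" by simp
          also have "\<dots> \<le> norm v * B i"
            using B(2)[of x i] \<open>x \<in> C\<close> C(2) component_le_norm_cart[of v i]
            by (intro mult_mono) auto
          finally show "norm (v$i *\<^sub>R pd i f x) \<le> norm v * B i" .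
        qed
        also have "\<dots> = L * norm v" unfolding L_def by (simp add: sum_distrib_left mult.commute)
        finally show "norm (\<Sum>i\<in>UNIV. v$i *\<^sub>R pd i f x) \<le> L * norm v" .
      qed
    qed
  qed
  with L0 show ?thesis by blast
qed

lemma mono2:
  fixes u :: "real \<Rightarrow> real"
  assumes "a \<le> b"
    and "\<And>t. t \<in> {a..b} \<Longrightarrow> (u has_real_derivative D t) (at t within {a..b})"
    and "\<And>t. t \<in> {a..b} \<Longrightarrow> D t \<le> 0"
  shows "u b \<le> u a"
  by (rule deriv_nonpos_mono[of a b "{a..b}" u D, OF order_refl assms(1) assms(2) assms(3)])

lemma interval_sub: "is_interval (I::real set) \<Longrightarrow> s \<in> I \<Longrightarrow> t \<in> I \<Longrightarrow> {s..t} \<subseteq> I"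
  unfolding is_interval_1 by (meson atLeastAtMost_iff subsetI)

lemma sol_cont:
  assumes "is_solution U F I phi"
  shows "continuous_on I phi"
  unfolding continuous_on_eq_continuous_within
proof
  fix t assume "t \<in> I"
  then have "(phi has_vector_derivative F (phi t)) (at t within I)"
    using assms unfolding is_solution_def by blast
  then show "continuous (at t within I) phi" by (rule has_vector_derivative_continuous)
qed

locale sys =
  fixes U :: "(real^'n) set" and X :: "real^'n \<Rightarrow> real^'n" and V :: "real^'n \<Rightarrow> real"
  assumes opn: "open U" and sX: "smooth_on U X" and sV: "smooth_on U V"
    and Vnn: "\<And>x. x\<in>U \<Longrightarrow> V x \<ge> 0" and orth: "\<And>x. x\<in>U \<Longrightarrow> grad V x \<bullet> X x = 0"
begin

definition F where "F x = X x - grad V x"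

lemma V_C1: "Ck_on (Suc 0) U V" using sV unfolding smooth_on_def by blast
lemma V_diff: "y \<in> U \<Longrightarrow> V differentiable (at y)"
  using Ck_diff_at[OF opn V_C1] by blast
lemma pdV_C1: "Ck_on (Suc 0) U (pd j V)"
  using smooth_pd[OF sV] unfolding smooth_on_def by blast
lemma grad_cont: "continuous_on U (grad V)"
proof -
  have "continuous_on U (\<lambda>y. \<chi> j. pd j V y)"
    using pdV_C1 Ck_cont by (intro continuous_on_vec_lambda) blast
  then show ?thesis by (simp add: grad_def[abs_def])
qed

lemma V_along_F:
  assumes "is_solution U F I phi" "t \<in> I"
  shows "((\<lambda>s. V (phi s)) has_real_derivative - (norm (grad V (phi t)))\<^sup>2) (at t within I)"
proof -
  have p: "phi t \<in> U" "(phi has_vector_derivative F (phi t)) (at t within I)"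
    using assms unfolding is_solution_def by auto
  have "grad V (phi t) \<bullet> F (phi t) = - (norm (grad V (phi t)))\<^sup>2"
    using orth[OF p(1)] by (simp add: F_def inner_diff_right power2_norm_eq_inner)
  with chain_curve[OF p(2) V_diff[OF p(1)]] show ?thesis by simp
qed

lemma V_along_X:
  assumes "is_solution U X I phi" "t \<in> I"
  shows "((\<lambda>s. V (phi s)) has_real_derivative 0) (at t within I)"
proof -
  have p: "phi t \<in> U" "(phi has_vector_derivative X (phi t)) (at t within I)"
    using assms unfolding is_solution_def by auto
  have "grad V (phi t) \<bullet> X (phi t) = 0" using orth[OF p(1)] .
  with chain_curve[OF p(2) V_diff[OF p(1)]] show ?thesis by simp
qed

lemma V_decr:
  assumes "is_solution U F I phi" "is_interval I" "s \<in> I" "t \<in> I" "s \<le> t"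
  shows "V (phi t) \<le> V (phi s)"
proof (rule deriv_nonpos_mono[of s t I _ "\<lambda>t. - (norm (grad V (phi t)))\<^sup>2"])
  show "{s..t} \<subseteq> I" using interval_sub assms(2,3,4) by blast
  show "\<And>x. x \<in> I \<Longrightarrow> ((\<lambda>s. V (phi s)) has_real_derivative - (norm (grad V (phi x)))\<^sup>2) (at x within I)"
    using V_along_F[OF assms(1)] by blast
  show "s \<le> t" by (rule assms(5))
  show "\<And>x. x \<in> I \<Longrightarrow> - (norm (grad V (phi x)))\<^sup>2 \<le> 0" by simp
qed

lemma glaeser:
  assumes "compact C" "C \<subseteq> U"
  shows "\<exists>Q\<ge>0. \<forall>y\<in>C. (norm (grad V y))\<^sup>2 \<le> Q * V y"
proof -
  obtain \<delta> D where D: "\<delta> > 0" "compact D" "D \<subseteq> U" "\<And>x. x\<in>C \<Longrightarrow> cball x \<delta> \<subseteq> D"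
    using thick[OF assms(1) opn assms(2)] by blast
  have "\<forall>j. \<exists>L\<ge>0. \<forall>C. convex C \<longrightarrow> C \<subseteq> D \<longrightarrow> (\<forall>a\<in>C. \<forall>b\<in>C. norm (pd j V a - pd j V b) \<le> L * norm (a - b))"
    using C1_lip[OF opn pdV_C1 D(2,3)] by blast
  then obtain Lj where Lj: "\<And>j. Lj j \<ge> 0"
    "\<And>j C a b. convex C \<Longrightarrow> C \<subseteq> D \<Longrightarrow> a \<in> C \<Longrightarrow> b \<in> C \<Longrightarrow> norm (pd j V a - pd j V b) \<le> Lj j * norm (a - b)"
    by metis
  define L where "L = (\<Sum>j\<in>UNIV. Lj j)"
  have L0: "L \<ge> 0" unfolding L_def using Lj(1) by (simp add: sum_nonneg)
  have lipg: "norm (grad V a - grad V b) \<le> L * norm (a - b)"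
    if "convex C'" "C' \<subseteq> D" "a \<in> C'" "b \<in> C'" for C' a b
  proof -
    have "norm (grad V a - grad V b) \<le> (\<Sum>j\<in>UNIV. \<bar>(grad V a - grad V b)$j\<bar>)"
      by (rule norm_le_l1_cart)
    also have "\<dots> \<le> (\<Sum>j\<in>UNIV. Lj j * norm (a - b))"
    proof (rule sum_mono)
      fix j
      show "\<bar>(grad V a - grad V b)$j\<bar> \<le> Lj j * norm (a - b)"
        using Lj(2)[OF that, of j] by (simp add: grad_def)
    qed
    also have "\<dots> = L * norm (a - b)" unfolding L_def by (simp add: sum_distrib_right)
    finally show ?thesis .
  qed
  obtain G where G: "G > 0" "\<And>y. y \<in> C \<Longrightarrow> norm (grad V y) \<le> G"
    using cont_bound[OF grad_cont assms] by blast
  define s where "s = min (1 / (2 * (L + 1))) (\<delta> / G)"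
  have s0: "s > 0" unfolding s_def using L0 G D(1) by auto
  have sL: "L * s \<le> 1/2"
  proof -
    have "s \<le> 1 / (2 * (L + 1))" unfolding s_def by simp
    then have "L * s \<le> L * (1 / (2 * (L + 1)))" using L0 by (rule mult_left_mono)
    also have "\<dots> \<le> 1/2" using L0 by (simp add: field_simps)
    finally show ?thesis .
  qed
  have main: "(norm (grad V y))\<^sup>2 \<le> (2 / s) * V y" if y: "y \<in> C" for y
  proof -
    define g where "g = grad V y"
    define w where "w = - s *\<^sub>R g"
    have nw: "norm w = s * norm g" unfolding w_def using s0 by simp
    have "norm w \<le> \<delta>"
    proof -
      have "norm w \<le> (\<delta> / G) * G"
        unfolding nw using G(2)[OF y] s0 G(1) unfolding g_def s_def
        by (intro mult_mono) auto
      then show ?thesis using G(1) by simp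
    qed
    then have yw: "y + w \<in> cball y \<delta>" by (simp add: dist_norm)
    have cb: "cball y \<delta> \<subseteq> D" using D(4)[OF y] .
    have seg: "closed_segment y (y + w) \<subseteq> cball y \<delta>"
      by (rule closed_segment_subset) (use yw D(1) in auto)
    define h where "h z = V z - g \<bullet> z" for z
    have hb: "norm (h (y + w) - h y) \<le> (L * norm w) * norm ((y + w) - y)"
    proof (rule differentiable_bound[OF convex_closed_segment])
      fix z assume z: "z \<in> closed_segment y (y + w)"
      then have zU: "z \<in> U" using seg cb D(3) by auto
      have "(h has_derivative (\<lambda>v. grad V z \<bullet> v - g \<bullet> v)) (at z)"
        unfolding h_def[abs_def]
        by (intro has_derivative_diff grad_has_derivative V_diff zU
            bounded_linear.has_derivative[OF bounded_linear_inner_right] has_derivative_ident)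
      then show "(h has_derivative (\<lambda>v. grad V z \<bullet> v - g \<bullet> v)) (at z within closed_segment y (y + w))"
        by (rule has_derivative_at_withinI)
      show "onorm (\<lambda>v. grad V z \<bullet> v - g \<bullet> v) \<le> L * norm w"
      proof (rule onorm_le)
        fix v
        have "norm (grad V z \<bullet> v - g \<bullet> v) = \<bar>(grad V z - g) \<bullet> v\<bar>" by (simp add: inner_diff_left)
        also have "\<dots> \<le> norm (grad V z - g) * norm v" by (rule Cauchy_Schwarz_ineq2)
        also have "norm (grad V z - g) \<le> L * norm w"
        proof -
          have "norm (grad V z - g) \<le> L * norm (z - y)"
            unfolding g_def
            by (rule lipg[of "cball y \<delta>"]) (use z seg cb D(1) in auto)
          also have "norm (z - y) \<le> norm w"
            using dist_in_closed_segment[OF z] by (simp add: dist_norm)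
          then have "L * norm (z - y) \<le> L * norm w" using L0 by (rule mult_left_mono)
          finally show ?thesis .
        qed
        then have "norm (grad V z - g) * norm v \<le> L * norm w * norm v" by (rule mult_right_mono) simp
        finally show "norm (grad V z \<bullet> v - g \<bullet> v) \<le> L * norm w * norm v" .
      qed
    qed auto
    have t1: "V (y + w) \<le> V y + g \<bullet> w + L * (norm w)\<^sup>2"
    proof -
      have "h (y + w) - h y \<le> L * norm w * norm w" using hb by simp
      then show ?thesis unfolding h_def by (simp add: inner_add_right power2_eq_square)
    qed
    have "y + w \<in> U" using yw cb D(3) by auto
    then have "0 \<le> V (y + w)" by (rule Vnn)
    moreover have "g \<bullet> w = - s * (norm g)\<^sup>2" unfolding w_def by (simp add: power2_norm_eq_inner)
    moreover have "(norm w)\<^sup>2 = s\<^sup>2 * (norm g)\<^sup>2" unfolding nw by (simp add: power_mult_distrib)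
    ultimately have ineq: "s * (norm g)\<^sup>2 \<le> V y + L * s\<^sup>2 * (norm g)\<^sup>2" using t1 by simp
    have "L * s\<^sup>2 * (norm g)\<^sup>2 = (L * s) * (s * (norm g)\<^sup>2)" by (simp add: power2_eq_square)
    also have "\<dots> \<le> (1/2) * (s * (norm g)\<^sup>2)" using sL s0 by (intro mult_right_mono) auto
    finally have "s * (norm g)\<^sup>2 \<le> 2 * V y" using ineq by simp
    then have "(norm g)\<^sup>2 \<le> 2 * V y / s" using s0 by (simp add: field_simps)
    then show ?thesis unfolding g_def by simp
  qed
  show ?thesis using main s0 by (intro exI[of _ "2/s"]) auto
qed

end

context sys begin

lemma inv_X: "invariant_set U X {x\<in>U. V x = 0}"
  unfolding invariant_set_def
proof (intro allI impI ballI)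
  fix I phi t
  assume H: "is_interval I \<and> is_solution U X I phi \<and> (\<exists>t0\<in>I. phi t0 \<in> {x \<in> U. V x = 0})"
    and t: "t \<in> I"
  then obtain t0 where t0: "t0 \<in> I" "V (phi t0) = 0" by auto
  have solX: "is_solution U X I phi" using H by simp
  have cvx: "convex I" using H is_interval_convex_1 by simp
  obtain k where k: "\<forall>s\<in>I. V (phi s) = k"
    using has_field_derivative_zero_constant[OF cvx V_along_X[OF solX]] by blast
  have "phi t \<in> U" using solX t unfolding is_solution_def by simp
  moreover have "V (phi t) = 0" using k t t0 by simp
  ultimately show "phi t \<in> {x \<in> U. V x = 0}" by simp
qed

lemma inv_F: "invariant_set U F {x\<in>U. V x = 0}"
  unfolding invariant_set_def
proof (intro allI impI ballI)
  fix I phi t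
  assume H: "is_interval I \<and> is_solution U F I phi \<and> (\<exists>t0\<in>I. phi t0 \<in> {x \<in> U. V x = 0})"
    and t: "t \<in> I"
  then obtain t0 where t0: "t0 \<in> I" "V (phi t0) = 0" by auto
  have sol: "is_solution U F I phi" and iI: "is_interval I" using H by auto
  have tU: "phi t \<in> U" using sol t unfolding is_solution_def by blast
  have "V (phi t) \<le> 0"
  proof (cases "t0 \<le> t")
    case True
    then show ?thesis using V_decr[OF sol iI t0(1) t] t0(2) by simp
  next
    case False
    then have tt: "t \<le> t0" by simp
    have sub: "{t..t0} \<subseteq> I" using interval_sub[OF iI t t0(1)] .
    have "compact (phi ` {t..t0})"
      by (rule compact_continuous_image[OF continuous_on_subset[OF sol_cont[OF sol] sub]]) simp
    moreover have "phi ` {t..t0} \<subseteq> U" using sol sub unfolding is_solution_def by auto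
    ultimately have "\<exists>Q\<ge>0. \<forall>y\<in>phi ` {t..t0}. (norm (grad V y))\<^sup>2 \<le> Q * V y"
      by (rule glaeser)
    then obtain Q where Q: "Q \<ge> 0" "\<And>y. y \<in> phi ` {t..t0} \<Longrightarrow> (norm (grad V y))\<^sup>2 \<le> Q * V y"
      by blast
    define w where "w s = - (V (phi s) * exp (Q * s))" for s
    have "w t0 \<le> w t"
    proof (rule mono2[OF tt])
      fix s assume s: "s \<in> {t..t0}"
      have d1: "((\<lambda>s. V (phi s)) has_real_derivative - (norm (grad V (phi s)))\<^sup>2) (at s within {t..t0})"
        using has_field_derivative_subset[OF V_along_F[OF sol] sub] s sub by (simp add: subset_iff)
      have d2: "((\<lambda>s. exp (Q * s)) has_real_derivative exp (Q * s) * Q) (at s within {t..t0})"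
        by (auto intro!: derivative_eq_intros)
      show "(w has_real_derivative - (- (norm (grad V (phi s)))\<^sup>2 * exp (Q * s) + exp (Q * s) * Q * V (phi s))) (at s within {t..t0})"
        unfolding w_def[abs_def] by (rule DERIV_minus[OF DERIV_mult[OF d1 d2]])
      have "(norm (grad V (phi s)))\<^sup>2 \<le> Q * V (phi s)" using Q(2) s by simp
      then have "0 \<le> exp (Q * s) * (Q * V (phi s) - (norm (grad V (phi s)))\<^sup>2)" by simp
      then show "- (- (norm (grad V (phi s)))\<^sup>2 * exp (Q * s) + exp (Q * s) * Q * V (phi s)) \<le> 0"
        by (simp add: algebra_simps)
    qed
    then have "V (phi t) * exp (Q * t) \<le> 0" unfolding w_def using t0(2) by simp
    then show ?thesis by (simp add: mult_le_0_iff)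
  qed
  with Vnn[OF tU] have "V (phi t) = 0" by simp
  with tU show "phi t \<in> {x \<in> U. V x = 0}" by simp
qed

lemma stayK:
  assumes "is_solution U F I phi" "is_interval I" "a \<in> I" "V (phi a) \<le> c" "t \<in> I" "a \<le> t"
  shows "phi t \<in> U \<and> V (phi t) \<in> {0..c}"
proof -
  have tU: "phi t \<in> U" using assms(1,5) unfolding is_solution_def by blast
  moreover have "V (phi t) \<le> V (phi a)" by (rule V_decr[OF assms(1,2,3,5,6)])
  ultimately show ?thesis using Vnn[OF tU] assms(4) by simp
qed

end

lemma mvt_within:
  fixes u :: "real \<Rightarrow> real"
  assumes "{a..b} \<subseteq> I" "a \<le> b"
    and "\<And>t. t \<in> I \<Longrightarrow> (u has_real_derivative D t) (at t within I)"
  shows "\<exists>x\<in>{a..b}. u b - u a = (b - a) * D x"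
proof -
  have "\<exists>x\<in>{a..b}. u b - u a = (*) (D x) (b - a)"
  proof (rule mvt_very_simple[OF assms(2)])
    fix x assume "a \<le> x" "x \<le> b"
    then have "x \<in> I" using assms(1) by auto
    have "(u has_real_derivative D x) (at x within {a..b})"
      by (rule has_field_derivative_subset[OF assms(3)[OF \<open>x \<in> I\<close>] assms(1)])
    then show "(u has_derivative (*) (D x)) (at x within {a..b})"
      by (simp add: has_field_derivative_def)
  qed
  then show ?thesis by (auto simp: mult.commute)
qed

lemma barbalat:
  fixes a f :: "real \<Rightarrow> real"
  assumes der: "\<And>t. t \<in> {0..} \<Longrightarrow> (a has_real_derivative f t) (at t within {0..})"
    and lim: "(a \<longlongrightarrow> l) at_top"
    and lip: "\<And>s t. s \<ge> 0 \<Longrightarrow> t \<ge> 0 \<Longrightarrow> \<bar>f t - f s\<bar> \<le> B * \<bar>t - s\<bar>"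
  shows "(f \<longlongrightarrow> 0) at_top"
proof (rule ccontr)
  assume nt: "\<not> (f \<longlongrightarrow> 0) at_top"
  have "\<exists>\<epsilon>>0. \<forall>T. \<exists>t\<ge>T. \<bar>f t\<bar> \<ge> \<epsilon>"
  proof (rule ccontr)
    assume "\<not> (\<exists>\<epsilon>>0. \<forall>T. \<exists>t\<ge>T. \<bar>f t\<bar> \<ge> \<epsilon>)"
    then have H: "\<And>\<epsilon>. \<epsilon> > 0 \<Longrightarrow> \<exists>T. \<forall>t\<ge>T. \<bar>f t\<bar> < \<epsilon>" by (meson not_le)
    have "(f \<longlongrightarrow> 0) at_top"
    proof (rule tendstoI)
      fix e :: real assume "e > 0"
      then obtain T where "\<forall>t\<ge>T. \<bar>f t\<bar> < e" using H by blast
      then show "\<forall>\<^sub>F t in at_top. dist (f t) 0 < e"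
        unfolding eventually_at_top_linorder by auto
    qed
    with nt show False by simp
  qed
  then obtain \<epsilon> where e0: "\<epsilon> > 0" and e1: "\<And>T. \<exists>t\<ge>T. \<bar>f t\<bar> \<ge> \<epsilon>" by blast
  define B' where "B' = max B 1"
  have B'0: "B' > 0" unfolding B'_def by simp
  define \<eta> where "\<eta> = \<epsilon> / (2 * B')"
  have \<eta>0: "\<eta> > 0" unfolding \<eta>_def using e0 B'0 by simp
  have "\<forall>\<^sub>F t in at_top. dist (a t) l < \<epsilon> * \<eta> / 4"
    using tendstoD[OF lim, of "\<epsilon> * \<eta> / 4"] e0 \<eta>0 by simp
  then obtain T where T: "\<And>t. t \<ge> T \<Longrightarrow> \<bar>a t - l\<bar> < \<epsilon> * \<eta> / 4"
    unfolding eventually_at_top_linorder dist_real_def by blast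
  obtain t where t: "t \<ge> max T 0" "\<bar>f t\<bar> \<ge> \<epsilon>" using e1 by blast
  have sub: "{t..t+\<eta>} \<subseteq> {0..}" using t by auto
  obtain x where x: "x \<in> {t..t+\<eta>}" "a (t + \<eta>) - a t = (t + \<eta> - t) * f x"
    using mvt_within[OF sub _ der] \<eta>0 by auto
  have "\<bar>f x - f t\<bar> \<le> B * \<bar>x - t\<bar>" using lip[of t x] t x by auto
  also have "\<dots> \<le> B' * \<bar>x - t\<bar>" unfolding B'_def by (intro mult_right_mono) auto
  also have "\<dots> \<le> B' * \<eta>" using x B'0 by (intro mult_left_mono) auto
  also have "\<dots> = \<epsilon> / 2" unfolding \<eta>_def using B'0 by simp
  finally have "\<bar>f x - f t\<bar> \<le> \<epsilon> / 2" .
  then have fx: "\<bar>f x\<bar> \<ge> \<epsilon> / 2" using t(2) by linarith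
  have "\<bar>a (t + \<eta>) - a t\<bar> = \<eta> * \<bar>f x\<bar>" using x(2) \<eta>0 by (simp add: abs_mult)
  also have "\<dots> \<ge> \<eta> * (\<epsilon> / 2)" using fx \<eta>0 by (intro mult_left_mono) auto
  finally have big: "\<bar>a (t + \<eta>) - a t\<bar> \<ge> \<epsilon> * \<eta> / 2" by (simp add: mult.commute)
  have "\<bar>a (t + \<eta>) - l\<bar> < \<epsilon> * \<eta> / 4" using T[of "t + \<eta>"] t \<eta>0 by simp
  moreover have "\<bar>a t - l\<bar> < \<epsilon> * \<eta> / 4" using T[of t] t by simp
  ultimately have "\<bar>a (t + \<eta>) - a t\<bar> < \<epsilon> * \<eta> / 2" by linarith
  with big show False by simp
qed

lemma mono_lim:
  fixes u :: "real \<Rightarrow> real"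
  assumes "\<And>s t. 0 \<le> s \<Longrightarrow> s \<le> t \<Longrightarrow> u t \<le> u s" "\<And>t. 0 \<le> t \<Longrightarrow> 0 \<le> u t"
  shows "\<exists>L. (u \<longlongrightarrow> L) at_top \<and> (\<forall>t\<ge>0. L \<le> u t)"
proof -
  define L where "L = Inf (u ` {0..})"
  have bdd: "bdd_below (u ` {0..})" unfolding bdd_below_def using assms(2) by auto
  have Lle: "L \<le> u t" if "t \<ge> 0" for t
    unfolding L_def using bdd that by (auto intro: cInf_lower)
  have "(u \<longlongrightarrow> L) at_top"
  proof (rule tendstoI)
    fix e :: real assume e: "e > 0"
    have "\<exists>x\<in>u ` {0..}. x < L + e"
      unfolding L_def by (rule cInf_lessD) (use e in auto)
    then obtain t0 where t0: "t0 \<ge> 0" "u t0 < L + e" by auto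
    show "\<forall>\<^sub>F t in at_top. dist (u t) L < e"
      unfolding eventually_at_top_linorder
    proof (intro exI allI impI)
      fix t assume "t \<ge> t0"
      then have "u t \<le> u t0" "L \<le> u t" using assms(1)[OF t0(1)] Lle t0(1) by auto
      then show "dist (u t) L < e" using t0 by (simp add: dist_real_def)
    qed
  qed
  then show ?thesis using Lle by blast
qed

lemma smooth_C1: "smooth_on U f \<Longrightarrow> Ck_on (Suc 0) U f"
  unfolding smooth_on_def by blast
lemma smooth_cont: "smooth_on U f \<Longrightarrow> continuous_on U f"
  unfolding smooth_on_def using Ck_on.simps(1) by blast

lemma grad_cont_gen:
  assumes "Ck_on (Suc 0) U w"
  shows "continuous_on U (grad w)"
proof -
  have "continuous_on U (\<lambda>y. \<chi> j. pd j w y)"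
    using assms by (intro continuous_on_vec_lambda) simp
  then show ?thesis by (simp add: grad_def[abs_def])
qed

locale sysc = sys +
  fixes c :: real
  assumes c0: "c > 0" and Kc: "compact {x\<in>U. V x \<in> {0..c}}"
    and A3: "S_set U X V \<inter> {x\<in>U. V x \<in> {0..c}} \<subseteq> {x\<in>U. V x = 0}"
begin

definition K where "K = {x\<in>U. V x \<in> {0..c}}"

lemma KU: "K \<subseteq> U" unfolding K_def by auto
lemma Kcomp: "compact K" unfolding K_def using Kc .

lemma F_cont: "continuous_on U F"
proof -
  have "continuous_on U (\<lambda>x. X x - grad V x)"
    using smooth_cont[OF sX] grad_cont by (intro continuous_on_diff)
  then show ?thesis by (simp add: F_def[abs_def])
qed

definition hk where "hk k i = (lie X ^^ k) (pd i V)"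
definition n2 where "n2 y = (\<Sum>j\<in>UNIV. pd j V y * pd j V y)"
definition qk where "qk k i y = (\<Sum>j\<in>UNIV. pd j (hk k i) y * (X y $ j - pd j V y))"

lemma hk_smooth: "smooth_on U (hk k i)"
  unfolding hk_def by (rule smooth_lie_iter[OF opn sX smooth_pd[OF sV]])

lemma n2_smooth: "smooth_on U n2"
  unfolding n2_def[abs_def]
  by (intro smooth_sum[OF opn] smooth_mult[OF opn] smooth_pd[OF sV]) auto

lemma qk_smooth: "smooth_on U (qk k i)"
  unfolding qk_def[abs_def]
  by (intro smooth_sum[OF opn] smooth_mult[OF opn] smooth_diff[OF opn] smooth_pd[OF sV]
      smooth_pd[OF hk_smooth] smooth_nth[OF opn sX]) auto

lemma n2_eq: "(norm (grad V y))\<^sup>2 = n2 y"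
  by (simp add: power2_norm_eq_inner inner_vec_def grad_def n2_def)

lemma gradF: "grad g y \<bullet> F y = (\<Sum>j\<in>UNIV. pd j g y * (X y $ j - pd j V y))"
  by (simp add: F_def grad_def inner_vec_def)

lemma hk_Suc: "hk (Suc k) i y = qk k i y + (\<Sum>j\<in>UNIV. pd j (hk k i) y * pd j V y)"
proof -
  have "hk (Suc k) i y = (\<Sum>j\<in>UNIV. X y $ j * pd j (hk k i) y)"
    by (simp add: hk_def lie_def grad_def inner_vec_def)
  also have "\<dots> = (\<Sum>j\<in>UNIV. pd j (hk k i) y * (X y $ j - pd j V y) + pd j (hk k i) y * pd j V y)"
    by (rule sum.cong) (auto simp: algebra_simps)
  also have "\<dots> = qk k i y + (\<Sum>j\<in>UNIV. pd j (hk k i) y * pd j V y)"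
    unfolding qk_def by (rule sum.distrib)
  finally show ?thesis .
qed

end

locale traj = sysc +
  fixes phi
  assumes sol: "is_solution U F {0..} phi" and p0: "phi 0 \<in> K"
begin

lemma inK: "t \<ge> 0 \<Longrightarrow> phi t \<in> K"
  using stayK[OF sol is_interval_ci, of 0 c t] p0 unfolding K_def by auto

lemma der_time:
  assumes "Ck_on (Suc 0) U w" "t \<in> {0..}"
  shows "((\<lambda>t. w (phi t)) has_real_derivative grad w (phi t) \<bullet> F (phi t)) (at t within {0..})"
proof -
  have p: "phi t \<in> U" "(phi has_vector_derivative F (phi t)) (at t within {0..})"
    using sol assms(2) unfolding is_solution_def by auto
  show ?thesis by (rule chain_curve[OF p(2) Ck_diff_at[OF opn assms(1) p(1)]])
qed

lemma lip_time:
  assumes "Ck_on (Suc 0) U w"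
  shows "\<exists>B. \<forall>s\<ge>0. \<forall>t\<ge>0. \<bar>w (phi t) - w (phi s)\<bar> \<le> B * \<bar>t - s\<bar>"
proof -
  obtain Gw where Gw: "Gw > 0" "\<And>y. y \<in> K \<Longrightarrow> norm (grad w y) \<le> Gw"
    using cont_bound[OF grad_cont_gen[OF assms] Kcomp KU] by blast
  obtain M where M: "M > 0" "\<And>y. y \<in> K \<Longrightarrow> norm (F y) \<le> M"
    using cont_bound[OF F_cont Kcomp KU] by blast
  have bd: "\<bar>grad w (phi t) \<bullet> F (phi t)\<bar> \<le> Gw * M" if "t \<in> {0..}" for t
  proof -
    have "phi t \<in> K" using inK that by simp
    have "\<bar>grad w (phi t) \<bullet> F (phi t)\<bar> \<le> norm (grad w (phi t)) * norm (F (phi t))"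
      by (rule Cauchy_Schwarz_ineq2)
    also have "\<dots> \<le> Gw * M"
      using Gw(1) Gw(2)[OF \<open>phi t \<in> K\<close>] M(2)[OF \<open>phi t \<in> K\<close>] by (intro mult_mono) auto
    finally show ?thesis .
  qed
  have le: "\<bar>w (phi t) - w (phi s)\<bar> \<le> (Gw * M) * (t - s)" if "0 \<le> s" "s \<le> t" for s t
  proof (rule deriv_bound_lip[of s t "{0..}" "\<lambda>t. w (phi t)" "\<lambda>t. grad w (phi t) \<bullet> F (phi t)"])
    show "{s..t} \<subseteq> {0..}" using that by auto
    show "s \<le> t" by (rule that(2))
    show "\<And>t. t \<in> {0..} \<Longrightarrow> ((\<lambda>t. w (phi t)) has_real_derivative grad w (phi t) \<bullet> F (phi t)) (at t within {0..})"
      by (rule der_time[OF assms])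
    show "\<And>t. t \<in> {0..} \<Longrightarrow> \<bar>grad w (phi t) \<bullet> F (phi t)\<bar> \<le> Gw * M" by (rule bd)
  qed
  have "\<bar>w (phi t) - w (phi s)\<bar> \<le> (Gw * M) * \<bar>t - s\<bar>" if "s \<ge> 0" "t \<ge> 0" for s t
  proof (cases "s \<le> t")
    case True then show ?thesis using le[OF that(1) True] by simp
  next
    case False
    then have "\<bar>w (phi s) - w (phi t)\<bar> \<le> (Gw * M) * (s - t)" using le[OF that(2)] by simp
    then show ?thesis using False by (simp add: abs_minus_commute)
  qed
  then show ?thesis by blast
qed

lemma V_conv: "\<exists>L. ((\<lambda>t. V (phi t)) \<longlongrightarrow> L) at_top"
proof -
  have "\<exists>L. ((\<lambda>t. V (phi t)) \<longlongrightarrow> L) at_top \<and> (\<forall>t\<ge>0. L \<le> V (phi t))"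
  proof (rule mono_lim)
    show "V (phi t) \<le> V (phi s)" if "0 \<le> s" "s \<le> t" for s t
      by (rule V_decr[OF sol is_interval_ci]) (use that in auto)
    show "0 \<le> V (phi t)" if "0 \<le> t" for t
      using inK[OF that] unfolding K_def by auto
  qed
  then show ?thesis by blast
qed

lemma n2_lim: "((\<lambda>t. n2 (phi t)) \<longlongrightarrow> 0) at_top"
proof -
  obtain L where L: "((\<lambda>t. V (phi t)) \<longlongrightarrow> L) at_top" using V_conv by blast
  obtain B where B: "\<And>s t. s \<ge> 0 \<Longrightarrow> t \<ge> 0 \<Longrightarrow> \<bar>n2 (phi t) - n2 (phi s)\<bar> \<le> B * \<bar>t - s\<bar>"
    using lip_time[OF smooth_C1[OF n2_smooth]] by blast
  have "((\<lambda>t. - n2 (phi t)) \<longlongrightarrow> 0) at_top"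
  proof (rule barbalat[OF _ L])
    show "((\<lambda>t. V (phi t)) has_real_derivative - n2 (phi t)) (at t within {0..})" if "t \<in> {0..}" for t
      using V_along_F[OF sol that] by (simp add: n2_eq)
    show "\<bar>- n2 (phi t) - - n2 (phi s)\<bar> \<le> B * \<bar>t - s\<bar>" if "s \<ge> 0" "t \<ge> 0" for s t
      using B[OF that] by (simp add: abs_minus_commute)
  qed
  then show ?thesis using tendsto_minus[of "\<lambda>t. - n2 (phi t)" 0 at_top] by simp
qed

lemma pdV_lim: "((\<lambda>t. pd j V (phi t)) \<longlongrightarrow> 0) at_top"
proof (rule Lim_null_comparison)
  show "\<forall>\<^sub>F t in at_top. norm (pd j V (phi t)) \<le> sqrt (n2 (phi t))"
  proof (rule always_eventually, rule allI)
    fix t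
    have "pd j V (phi t) * pd j V (phi t) \<le> n2 (phi t)"
      unfolding n2_def by (rule member_le_sum) auto
    then have "sqrt ((pd j V (phi t))\<^sup>2) \<le> sqrt (n2 (phi t))"
      unfolding power2_eq_square by (rule real_sqrt_le_mono)
    then show "norm (pd j V (phi t)) \<le> sqrt (n2 (phi t))" by simp
  qed
  show "((\<lambda>t. sqrt (n2 (phi t))) \<longlongrightarrow> 0) at_top"
    using tendsto_real_sqrt[OF n2_lim] by simp
qed

lemma hk_lim: "((\<lambda>t. hk k i (phi t)) \<longlongrightarrow> 0) at_top"
proof (induction k arbitrary: i)
  case 0
  then show ?case using pdV_lim[of i] by (simp add: hk_def)
next
  case (Suc k)
  obtain B where B: "\<And>s t. s \<ge> 0 \<Longrightarrow> t \<ge> 0 \<Longrightarrow> \<bar>qk k i (phi t) - qk k i (phi s)\<bar> \<le> B * \<bar>t - s\<bar>"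
    using lip_time[OF smooth_C1[OF qk_smooth]] by blast
  have q: "((\<lambda>t. qk k i (phi t)) \<longlongrightarrow> 0) at_top"
  proof (rule barbalat[OF _ Suc.IH[of i]])
    show "((\<lambda>t. hk k i (phi t)) has_real_derivative qk k i (phi t)) (at t within {0..})" if "t \<in> {0..}" for t
      using der_time[OF smooth_C1[OF hk_smooth] that] by (simp add: gradF qk_def)
    show "\<bar>qk k i (phi t) - qk k i (phi s)\<bar> \<le> B * \<bar>t - s\<bar>" if "s \<ge> 0" "t \<ge> 0" for s t
      using B[OF that] .
  qed
  have s: "((\<lambda>t. \<Sum>j\<in>UNIV. pd j (hk k i) (phi t) * pd j V (phi t)) \<longlongrightarrow> 0) at_top"
  proof (rule tendsto_null_sum)
    fix j
    obtain Bj where Bj: "Bj > 0" "\<And>y. y \<in> K \<Longrightarrow> norm (pd j (hk k i) y) \<le> Bj"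
      using cont_bound[OF smooth_cont[OF smooth_pd[OF hk_smooth]] Kcomp KU] by blast
    show "((\<lambda>t. pd j (hk k i) (phi t) * pd j V (phi t)) \<longlongrightarrow> 0) at_top"
    proof (rule Lim_null_comparison)
      show "\<forall>\<^sub>F t in at_top. norm (pd j (hk k i) (phi t) * pd j V (phi t)) \<le> Bj * \<bar>pd j V (phi t)\<bar>"
        unfolding eventually_at_top_linorder
      proof (intro exI allI impI)
        fix t :: real assume "t \<ge> 0"
        then have "phi t \<in> K" by (rule inK)
        then show "norm (pd j (hk k i) (phi t) * pd j V (phi t)) \<le> Bj * \<bar>pd j V (phi t)\<bar>"
          using Bj(2)[of "phi t"] by (simp add: abs_mult mult_right_mono)
      qed
      show "((\<lambda>t. Bj * \<bar>pd j V (phi t)\<bar>) \<longlongrightarrow> 0) at_top"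
        using tendsto_mult[OF tendsto_const tendsto_rabs[OF pdV_lim[of j]], of Bj] by simp
    qed
  qed
  show ?case
    using tendsto_add[OF q s] by (simp add: hk_Suc)
qed

end

context sysc begin
lemma V_isCont: "y \<in> U \<Longrightarrow> isCont V y"
  using smooth_cont[OF sV] opn continuous_on_eq_continuous_at by blast
lemma hk_isCont: "y \<in> U \<Longrightarrow> isCont (hk k i) y"
  using smooth_cont[OF hk_smooth] opn continuous_on_eq_continuous_at by blast
end

context traj begin

lemma L_zero: "((\<lambda>t. V (phi t)) \<longlongrightarrow> 0) at_top"
proof -
  obtain L where L: "((\<lambda>t. V (phi t)) \<longlongrightarrow> L) at_top" using V_conv by blast
  have inn: "\<forall>n. phi (real n) \<in> K" using inK by simp
  obtain p r where p: "p \<in> K" "strict_mono r" "((\<lambda>n. phi (real n)) \<circ> r) \<longlonglongrightarrow> p"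
    by (rule seq_compactE[OF compact_imp_seq_compact[OF Kcomp] inn])
  have pU: "p \<in> U" using p(1) KU by auto
  have tn: "filterlim (\<lambda>n. real (r n)) at_top sequentially"
    by (rule filterlim_compose[OF filterlim_real_sequentially filterlim_subseq[OF p(2)]])
  have pc: "(\<lambda>n. phi (real (r n))) \<longlonglongrightarrow> p" using p(3) by (simp add: o_def)
  have "hk k i p = 0" for k i
  proof -
    have a: "(\<lambda>n. hk k i (phi (real (r n)))) \<longlonglongrightarrow> 0"
      by (rule filterlim_compose[OF hk_lim tn])
    have b: "(\<lambda>n. hk k i (phi (real (r n)))) \<longlonglongrightarrow> hk k i p"
      by (rule isCont_tendsto_compose[OF hk_isCont[OF pU] pc])
    show ?thesis using LIMSEQ_unique[OF b a] .
  qed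
  then have "p \<in> S_set U X V" unfolding S_set_def hk_def using pU by simp
  with p(1) A3 have Vp: "V p = 0" unfolding K_def by blast
  have a: "(\<lambda>n. V (phi (real (r n)))) \<longlonglongrightarrow> L" by (rule filterlim_compose[OF L tn])
  have b: "(\<lambda>n. V (phi (real (r n)))) \<longlonglongrightarrow> V p"
    by (rule isCont_tendsto_compose[OF V_isCont[OF pU] pc])
  have "L = V p" using LIMSEQ_unique[OF a b] .
  with Vp L show ?thesis by simp
qed

lemma infdist_lim: "((\<lambda>t. infdist (phi t) {x\<in>U. V x = 0}) \<longlongrightarrow> 0) at_top"
proof (rule ccontr)
  let ?Z = "{x\<in>U. V x = 0}"
  assume nt: "\<not> ?thesis"
  have "\<exists>\<epsilon>>0. \<forall>T. \<exists>t\<ge>T. infdist (phi t) ?Z \<ge> \<epsilon>"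
  proof (rule ccontr)
    assume "\<not> (\<exists>\<epsilon>>0. \<forall>T. \<exists>t\<ge>T. infdist (phi t) ?Z \<ge> \<epsilon>)"
    then have H: "\<And>\<epsilon>. \<epsilon> > 0 \<Longrightarrow> \<exists>T. \<forall>t\<ge>T. infdist (phi t) ?Z < \<epsilon>" by (meson not_le)
    have "((\<lambda>t. infdist (phi t) ?Z) \<longlongrightarrow> 0) at_top"
    proof (rule tendstoI)
      fix e :: real assume "e > 0"
      then obtain T where "\<forall>t\<ge>T. infdist (phi t) ?Z < e" using H by blast
      then show "\<forall>\<^sub>F t in at_top. dist (infdist (phi t) ?Z) 0 < e"
        unfolding eventually_at_top_linorder by (auto simp: infdist_nonneg)
    qed
    with nt show False by simp
  qed
  then obtain \<epsilon> where e0: "\<epsilon> > 0" and e1: "\<And>T. \<exists>t\<ge>T. infdist (phi t) ?Z \<ge> \<epsilon>" by blast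
  have "\<forall>n. \<exists>t. t \<ge> real n \<and> infdist (phi t) ?Z \<ge> \<epsilon>" using e1 by blast
  from choice[OF this] obtain tt where tt0: "\<forall>n. tt n \<ge> real n \<and> infdist (phi (tt n)) ?Z \<ge> \<epsilon>"
    by blast
  have tt: "\<And>n. tt n \<ge> real n" "\<And>n. infdist (phi (tt n)) ?Z \<ge> \<epsilon>" using tt0 by auto
  have inn: "\<forall>n. phi (tt n) \<in> K"
  proof
    fix n have "tt n \<ge> 0" using tt(1)[of n] by linarith
    then show "phi (tt n) \<in> K" by (rule inK)
  qed
  obtain q r where q: "q \<in> K" "strict_mono r" "((\<lambda>n. phi (tt n)) \<circ> r) \<longlonglongrightarrow> q"
    by (rule seq_compactE[OF compact_imp_seq_compact[OF Kcomp] inn])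
  have qU: "q \<in> U" using q(1) KU by auto
  have "filterlim (\<lambda>n. real (r n)) at_top sequentially"
    by (rule filterlim_compose[OF filterlim_real_sequentially filterlim_subseq[OF q(2)]])
  then have tn: "filterlim (\<lambda>n. tt (r n)) at_top sequentially"
    by (rule filterlim_at_top_mono) (use tt(1) in simp)
  have qc: "(\<lambda>n. phi (tt (r n))) \<longlonglongrightarrow> q" using q(3) by (simp add: o_def)
  have a: "(\<lambda>n. V (phi (tt (r n)))) \<longlonglongrightarrow> 0" by (rule filterlim_compose[OF L_zero tn])
  have b: "(\<lambda>n. V (phi (tt (r n)))) \<longlonglongrightarrow> V q"
    by (rule isCont_tendsto_compose[OF V_isCont[OF qU] qc])
  have "V q = 0" using LIMSEQ_unique[OF b a] .
  with qU have qZ: "q \<in> ?Z" by simp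
  have "(\<lambda>n. dist (phi (tt (r n))) q) \<longlonglongrightarrow> dist q q"
    by (rule tendsto_dist[OF qc tendsto_const])
  then have "\<forall>\<^sub>F n in sequentially. dist (phi (tt (r n))) q < \<epsilon>"
    using e0 by (simp add: order_tendstoD(2))
  then obtain N where N: "\<forall>n\<ge>N. dist (phi (tt (r n))) q < \<epsilon>"
    unfolding eventually_sequentially by blast
  define n where "n = N"
  have "dist (phi (tt (r n))) q < \<epsilon>" using N unfolding n_def by simp
  moreover have "infdist (phi (tt (r n))) ?Z \<le> dist (phi (tt (r n))) q"
    by (rule infdist_le[OF qZ])
  ultimately show False using tt(2)[of "r n"] by simp
qed

end

lemma picard_local:
  fixes F :: "real^'n \<Rightarrow> real^'n" and x :: "real^'n"
  assumes d0: "\<delta> > 0" and M0: "M > 0" and L0: "L \<ge> 0"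
    and Fc: "continuous_on (cball x \<delta>) F"
    and Fb: "\<And>y. y \<in> cball x \<delta> \<Longrightarrow> norm (F y) \<le> M"
    and Fl: "\<And>y z. y \<in> cball x \<delta> \<Longrightarrow> z \<in> cball x \<delta> \<Longrightarrow> norm (F y - F z) \<le> L * norm (y - z)"
    and hdef: "h = min (\<delta> / M) (1 / (2 * (L + 1)))"
  shows "\<exists>g. g a0 = x \<and> (\<forall>t\<in>{a0..a0+h}. g t \<in> cball x \<delta> \<and>
            (g has_vector_derivative F (g t)) (at t within {a0..a0+h}))"
proof -
  let ?S = "cball x \<delta>"
  define cp where "cp = closest_point ?S"
  have Sne: "?S \<noteq> {}" using d0 by auto
  have cpS: "cp y \<in> ?S" for y unfolding cp_def by (rule closest_point_in_set[OF closed_cball Sne])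
  have cpL: "norm (cp y - cp z) \<le> norm (y - z)" for y z
    using closest_point_lipschitz[OF convex_cball closed_cball Sne, of y z] by (simp add: cp_def dist_norm)
  have cpc: "continuous_on UNIV cp" unfolding cp_def by (rule continuous_on_closest_point[OF convex_cball closed_cball Sne])
  define G where "G y = F (cp y)" for y
  have Gc: "continuous_on UNIV G"
    unfolding G_def[abs_def] by (rule continuous_on_compose2[OF Fc cpc]) (use cpS in blast)
  have Gb: "norm (G y) \<le> M" for y unfolding G_def using Fb cpS by blast
  have Gl: "norm (G y - G z) \<le> L * norm (y - z)" for y z
  proof -
    have "norm (G y - G z) \<le> L * norm (cp y - cp z)" unfolding G_def using Fl cpS by blast
    also have "\<dots> \<le> L * norm (y - z)" using cpL L0 by (rule mult_left_mono)
    finally show ?thesis .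
  qed
  have h0: "h > 0" unfolding hdef using d0 M0 L0 by auto
  have hM: "M * h \<le> \<delta>"
  proof -
    have "M * h \<le> M * (\<delta> / M)" unfolding hdef using M0 by (intro mult_left_mono) auto
    then show ?thesis using M0 by simp
  qed
  have hL: "L * h \<le> 1/2"
  proof -
    have "L * h \<le> L * (1 / (2 * (L + 1)))" unfolding hdef using L0 by (intro mult_left_mono) auto
    also have "\<dots> \<le> 1/2" using L0 by (simp add: field_simps)
    finally show ?thesis .
  qed
  define cl where "cl t = max a0 (min (a0 + h) t)" for t
  have clI: "cl t \<in> {a0..a0+h}" for t unfolding cl_def using h0 by auto
  have clc: "continuous_on UNIV cl" unfolding cl_def[abs_def] by (intro continuous_intros)
  define Pf where "Pf f t = x + integral {a0..cl t} (\<lambda>s. G (apply_bcontfun f s))" for f :: "(real, real^'n) bcontfun" and t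
  have fc: "continuous_on A (\<lambda>s. G (apply_bcontfun f s))" for f :: "(real, real^'n) bcontfun" and A
    using continuous_on_compose2[OF Gc continuous_on_apply_bcontfun[of UNIV f]] continuous_on_subset by blast
  have intb: "norm (integral {a0..\<tau>} (\<lambda>s. G (apply_bcontfun f s)) - integral {a0..\<tau>} (\<lambda>s. G (apply_bcontfun g s))) \<le> B * (\<tau> - a0)"
    if "a0 \<le> \<tau>" "\<And>s. norm (G (apply_bcontfun f s) - G (apply_bcontfun g s)) \<le> B" "B \<ge> 0"
    for f g :: "(real, real^'n) bcontfun" and \<tau> B
  proof -
    have i1: "(\<lambda>s. G (apply_bcontfun f s)) integrable_on {a0..\<tau>}" by (rule integrable_continuous_interval[OF fc])
    have i2: "(\<lambda>s. G (apply_bcontfun g s)) integrable_on {a0..\<tau>}" by (rule integrable_continuous_interval[OF fc])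
    have "((\<lambda>s. G (apply_bcontfun f s) - G (apply_bcontfun g s)) has_integral
        (integral {a0..\<tau>} (\<lambda>s. G (apply_bcontfun f s)) - integral {a0..\<tau>} (\<lambda>s. G (apply_bcontfun g s)))) (cbox a0 \<tau>)"
      using has_integral_diff[OF integrable_integral[OF i1] integrable_integral[OF i2]] by simp
    from has_integral_bound[OF that(3) this] that(2) that(1)
    show ?thesis by (simp add: content_real)
  qed
  have intb0: "norm (integral {a0..\<tau>} (\<lambda>s. G (apply_bcontfun f s))) \<le> M * (\<tau> - a0)"
    if "a0 \<le> \<tau>" for f :: "(real, real^'n) bcontfun" and \<tau>
  proof -
    have i1: "(\<lambda>s. G (apply_bcontfun f s)) integrable_on {a0..\<tau>}" by (rule integrable_continuous_interval[OF fc])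
    from has_integral_bound[OF less_imp_le[OF M0] integrable_integral[OF i1[unfolded box_real(2)[symmetric]]]] Gb that
    show ?thesis by (simp add: content_real)
  qed
  have mem: "Pf f \<in> bcontfun" for f
  proof -
    have c1: "continuous_on {a0..a0+h} (\<lambda>\<tau>. integral {a0..\<tau>} (\<lambda>s. G (apply_bcontfun f s)))"
      by (rule indefinite_integral_continuous_1[OF integrable_continuous_interval[OF fc]])
    have "continuous_on UNIV (\<lambda>t. integral {a0..cl t} (\<lambda>s. G (apply_bcontfun f s)))"
      by (rule continuous_on_compose2[OF c1 clc]) (use clI in blast)
    then have c: "continuous_on UNIV (Pf f)"
      unfolding Pf_def[abs_def] by (intro continuous_intros)
    have "norm (Pf f t) \<le> norm x + M * h" for t
    proof -
      have "norm (Pf f t) \<le> norm x + norm (integral {a0..cl t} (\<lambda>s. G (apply_bcontfun f s)))"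
        unfolding Pf_def by (rule norm_triangle_ineq)
      also have "norm (integral {a0..cl t} (\<lambda>s. G (apply_bcontfun f s))) \<le> M * (cl t - a0)"
        using intb0 clI by simp
      also have "M * (cl t - a0) \<le> M * h" using clI[of t] M0 by (intro mult_left_mono) auto
      finally show ?thesis by simp
    qed
    then have "bounded (range (Pf f))" unfolding bounded_iff by blast
    with c show ?thesis unfolding bcontfun_def by simp
  qed
  define P where "P f = Bcontfun (Pf f)" for f
  have Pap: "apply_bcontfun (P f) = Pf f" for f unfolding P_def using mem Bcontfun_inverse by blast
  have contr: "dist (P f) (P g) \<le> (1/2) * dist f g" for f g
  proof (rule dist_bound)
    fix t
    have "dist (apply_bcontfun (P f) t) (apply_bcontfun (P g) t) =
      norm (integral {a0..cl t} (\<lambda>s. G (apply_bcontfun f s)) - integral {a0..cl t} (\<lambda>s. G (apply_bcontfun g s)))"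
      unfolding Pap Pf_def by (simp add: dist_norm)
    also have "\<dots> \<le> (L * dist f g) * (cl t - a0)"
    proof (rule intb)
      show "a0 \<le> cl t" using clI by auto
      show "0 \<le> L * dist f g" using L0 by simp
      fix s
      have "norm (G (apply_bcontfun f s) - G (apply_bcontfun g s)) \<le> L * norm (apply_bcontfun f s - apply_bcontfun g s)"
        by (rule Gl)
      also have "\<dots> \<le> L * dist f g" using dist_bounded[of f s g] L0 by (intro mult_left_mono) (auto simp: dist_norm)
      finally show "norm (G (apply_bcontfun f s) - G (apply_bcontfun g s)) \<le> L * dist f g" .
    qed
    also have "\<dots> \<le> (L * dist f g) * h" using clI[of t] L0 by (intro mult_left_mono) auto
    also have "\<dots> = (L * h) * dist f g" by simp
    also have "\<dots> \<le> (1/2) * dist f g" using hL by (intro mult_right_mono) auto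
    finally show "dist (apply_bcontfun (P f) t) (apply_bcontfun (P g) t) \<le> 1/2 * dist f g" .
  qed
  obtain ff where ff: "P ff = ff" using banach_fix_type[of "1/2" P] contr by auto
  define g where "g = apply_bcontfun ff"
  have geq: "g t = x + integral {a0..cl t} (\<lambda>s. G (g s))" for t
    using arg_cong[OF ff, of apply_bcontfun] unfolding Pap g_def by (metis Pf_def)
  have cl_id: "cl t = t" if "t \<in> {a0..a0+h}" for t using that unfolding cl_def by auto
  have geq2: "g t = x + integral {a0..t} (\<lambda>s. G (g s))" if "t \<in> {a0..a0+h}" for t
    using geq[of t] cl_id[OF that] by simp
  have gin: "g t \<in> ?S" if "t \<in> {a0..a0+h}" for t
  proof -
    have "norm (g t - x) = norm (integral {a0..t} (\<lambda>s. G (g s)))" using geq2[OF that] by simp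
    also have "\<dots> \<le> M * (t - a0)" using intb0[of t ff] that unfolding g_def by simp
    also have "\<dots> \<le> M * h" using that M0 by (intro mult_left_mono) auto
    finally show ?thesis using hM by (simp add: dist_norm norm_minus_commute)
  qed
  have "g a0 = x" using geq2[of a0] h0 by simp
  moreover have "(g has_vector_derivative F (g t)) (at t within {a0..a0+h})" if t: "t \<in> {a0..a0+h}" for t
  proof -
    have gc: "continuous_on {a0..a0+h} (\<lambda>s. G (g s))" unfolding g_def by (rule fc)
    have "((\<lambda>u. x + integral {a0..u} (\<lambda>s. G (g s))) has_vector_derivative G (g t)) (at t within {a0..a0+h})"
      using has_vector_derivative_add[OF has_vector_derivative_const integral_has_vector_derivative[OF gc t]] by simp
    then have "(g has_vector_derivative G (g t)) (at t within {a0..a0+h})"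
      by (rule has_vector_derivative_transform[OF t geq2, rotated])
    moreover have "G (g t) = F (g t)" unfolding G_def cp_def using closest_point_self[OF gin[OF t]] by simp
    ultimately show ?thesis by simp
  qed
  ultimately show ?thesis using gin by blast
qed

lemma hvd_Un:
  assumes "(f has_vector_derivative f') (at x within A)" "(f has_vector_derivative f') (at x within B)"
  shows "(f has_vector_derivative f') (at x within A \<union> B)"
  using assms unfolding has_vector_derivative_def has_derivative_within by (auto simp: Lim_within_Un)

lemma floor_piece:
  assumes "h > 0" "real n * h \<le> t" "t < (real n + 1) * h"
  shows "nat \<lfloor>t / h\<rfloor> = n"
proof -
  have "real n \<le> t / h" using assms by (simp add: le_divide_eq)
  moreover have "t / h < real n + 1" using assms by (simp add: divide_less_eq)
  ultimately have "\<lfloor>t / h\<rfloor> = int n" by (intro floor_unique) auto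
  then show ?thesis by simp
qed

lemma piece_of:
  assumes "h > 0" "t \<ge> 0"
  shows "real (nat \<lfloor>t / h\<rfloor>) * h \<le> t \<and> t < (real (nat \<lfloor>t / h\<rfloor>) + 1) * h"
proof -
  have f0: "\<lfloor>t / h\<rfloor> \<ge> 0" using assms by simp
  then have e: "real (nat \<lfloor>t / h\<rfloor>) = real_of_int \<lfloor>t / h\<rfloor>" by simp
  have "real_of_int \<lfloor>t / h\<rfloor> \<le> t / h" by simp
  moreover have "t / h < real_of_int \<lfloor>t / h\<rfloor> + 1" by linarith
  note a = this
  have l1: "real_of_int \<lfloor>t / h\<rfloor> * h \<le> t"
    using mult_right_mono[OF of_int_floor_le[of "t/h"] less_imp_le[OF assms(1)]] assms(1) by simp
  have l2: "t < (real_of_int \<lfloor>t / h\<rfloor> + 1) * h"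
    using mult_strict_right_mono[OF a assms(1)] assms(1) by simp
  from l1 l2 have "real_of_int \<lfloor>t / h\<rfloor> * h \<le> t" "t < (real_of_int \<lfloor>t / h\<rfloor> + 1) * h" by auto
  then show ?thesis unfolding e by simp
qed

context sysc begin

lemma local_data:
  "\<exists>\<delta>>0. \<exists>M>0. \<exists>L\<ge>0. \<forall>x\<in>K. cball x \<delta> \<subseteq> U \<and> (\<forall>y\<in>cball x \<delta>. norm (F y) \<le> M)
     \<and> (\<forall>y\<in>cball x \<delta>. \<forall>z\<in>cball x \<delta>. norm (F y - F z) \<le> L * norm (y - z))"
proof -
  obtain \<delta> D where D: "\<delta> > 0" "compact D" "D \<subseteq> U" "\<And>x. x\<in>K \<Longrightarrow> cball x \<delta> \<subseteq> D"
    using thick[OF Kcomp opn KU] by blast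
  obtain M where M: "M > 0" "\<And>y. y \<in> D \<Longrightarrow> norm (F y) \<le> M"
    using cont_bound[OF F_cont D(2,3)] by blast
  have Fj: "Ck_on (Suc 0) U (\<lambda>y. X y $ j - pd j V y)" for j
    by (rule smooth_C1) (intro smooth_diff[OF opn] smooth_nth[OF opn sX] smooth_pd[OF sV])
  have "\<forall>j. \<exists>L\<ge>0. \<forall>C. convex C \<longrightarrow> C \<subseteq> D \<longrightarrow> (\<forall>a\<in>C. \<forall>b\<in>C.
      norm ((X a $ j - pd j V a) - (X b $ j - pd j V b)) \<le> L * norm (a - b))"
    using C1_lip[OF opn Fj D(2,3)] by blast
  then obtain Lj where Lj: "\<And>j. Lj j \<ge> 0"
    "\<And>j C a b. convex C \<Longrightarrow> C \<subseteq> D \<Longrightarrow> a \<in> C \<Longrightarrow> b \<in> C \<Longrightarrow>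
       norm ((X a $ j - pd j V a) - (X b $ j - pd j V b)) \<le> Lj j * norm (a - b)"
    by metis
  define L where "L = (\<Sum>j\<in>UNIV. Lj j)"
  have L0: "L \<ge> 0" unfolding L_def using Lj(1) by (simp add: sum_nonneg)
  have lipF: "norm (F a - F b) \<le> L * norm (a - b)"
    if "convex C'" "C' \<subseteq> D" "a \<in> C'" "b \<in> C'" for C' a b
  proof -
    have "norm (F a - F b) \<le> (\<Sum>j\<in>UNIV. \<bar>(F a - F b)$j\<bar>)"
      by (rule norm_le_l1_cart)
    also have "\<dots> \<le> (\<Sum>j\<in>UNIV. Lj j * norm (a - b))"
    proof (rule sum_mono)
      fix j
      show "\<bar>(F a - F b)$j\<bar> \<le> Lj j * norm (a - b)"
        using Lj(2)[OF that, of j] by (simp add: F_def grad_def)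
    qed
    also have "\<dots> = L * norm (a - b)" unfolding L_def by (simp add: sum_distrib_right)
    finally show ?thesis .
  qed
  have "\<forall>x\<in>K. cball x \<delta> \<subseteq> U \<and> (\<forall>y\<in>cball x \<delta>. norm (F y) \<le> M)
     \<and> (\<forall>y\<in>cball x \<delta>. \<forall>z\<in>cball x \<delta>. norm (F y - F z) \<le> L * norm (y - z))"
  proof
    fix x assume x: "x \<in> K"
    have "cball x \<delta> \<subseteq> U" using D(3) D(4)[OF x] by blast
    moreover have "\<forall>y\<in>cball x \<delta>. norm (F y) \<le> M" using M(2) D(4)[OF x] by blast
    moreover have "\<forall>y\<in>cball x \<delta>. \<forall>z\<in>cball x \<delta>. norm (F y - F z) \<le> L * norm (y - z)"
      using lipF[OF convex_cball D(4)[OF x]] by blast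
    ultimately show "cball x \<delta> \<subseteq> U \<and> (\<forall>y\<in>cball x \<delta>. norm (F y) \<le> M)
     \<and> (\<forall>y\<in>cball x \<delta>. \<forall>z\<in>cball x \<delta>. norm (F y - F z) \<le> L * norm (y - z))" by blast
  qed
  then show ?thesis using D(1) M(1) L0 by blast
qed

lemma local_exist:
  "\<exists>h>0. \<forall>x\<in>K. \<forall>a0. \<exists>g. g a0 = x \<and> is_solution U F {a0..a0+h} g"
proof -
  obtain \<delta> M L where dML: "\<delta> > 0" "M > 0" "L \<ge> 0"
    and H: "\<And>x. x\<in>K \<Longrightarrow> cball x \<delta> \<subseteq> U \<and> (\<forall>y\<in>cball x \<delta>. norm (F y) \<le> M)
     \<and> (\<forall>y\<in>cball x \<delta>. \<forall>z\<in>cball x \<delta>. norm (F y - F z) \<le> L * norm (y - z))"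
    using local_data by blast
  define h where "h = min (\<delta> / M) (1 / (2 * (L + 1)))"
  have h0: "h > 0" unfolding h_def using dML by auto
  have "\<exists>g. g a0 = x \<and> is_solution U F {a0..a0+h} g" if x: "x \<in> K" for x a0
  proof -
    have sub: "cball x \<delta> \<subseteq> U" using H[OF x] by blast
    have "\<exists>g. g a0 = x \<and> (\<forall>t\<in>{a0..a0+h}. g t \<in> cball x \<delta> \<and>
            (g has_vector_derivative F (g t)) (at t within {a0..a0+h}))"
    proof (rule picard_local[OF dML(1) dML(2) dML(3) continuous_on_subset[OF F_cont sub] _ _ h_def])
      show "\<And>y. y \<in> cball x \<delta> \<Longrightarrow> norm (F y) \<le> M" using H[OF x] by blast
      show "\<And>y z. y \<in> cball x \<delta> \<Longrightarrow> z \<in> cball x \<delta> \<Longrightarrow> norm (F y - F z) \<le> L * norm (y - z)"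
        using H[OF x] by blast
    qed
    then obtain g where g: "g a0 = x" "\<And>t. t\<in>{a0..a0+h} \<Longrightarrow> g t \<in> cball x \<delta> \<and>
            (g has_vector_derivative F (g t)) (at t within {a0..a0+h})" by blast
    have "is_solution U F {a0..a0+h} g" unfolding is_solution_def using g(2) sub by blast
    with g(1) show ?thesis by blast
  qed
  with h0 show ?thesis by blast
qed

end

context sysc begin

lemma global_exist:
  assumes x0: "x0 \<in> K"
  shows "\<exists>phi. phi 0 = x0 \<and> is_solution U F {0..} phi"
proof -
  obtain h where h0: "h > 0" and LE: "\<And>x a0. x \<in> K \<Longrightarrow> \<exists>g. g a0 = x \<and> is_solution U F {a0..a0+h} g"
    using local_exist by blast
  define S where "S a x = (SOME g. g a = x \<and> is_solution U F {a..a+h} g)" for a x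
  have S: "S a x a = x \<and> is_solution U F {a..a+h} (S a x)" if "x \<in> K" for a x
    unfolding S_def by (rule someI_ex[OF LE[OF that]])
  define xs where "xs = rec_nat x0 (\<lambda>n y. S (real n * h) y (real n * h + h))"
  have xs0: "xs 0 = x0" unfolding xs_def by simp
  have xsS: "xs (Suc n) = S (real n * h) (xs n) (real n * h + h)" for n unfolding xs_def by simp
  have xsK: "xs n \<in> K" for n
  proof (induction n)
    case 0 then show ?case using x0 xs0 by simp
  next
    case (Suc n)
    have s: "S (real n * h) (xs n) (real n * h) = xs n"
      and sol: "is_solution U F {real n * h..real n * h + h} (S (real n * h) (xs n))"
      using S[OF Suc.IH] by auto
    have "V (S (real n * h) (xs n) (real n * h)) \<le> c" using Suc.IH s unfolding K_def by simp
    then have "S (real n * h) (xs n) (real n * h + h) \<in> U \<and> V (S (real n * h) (xs n) (real n * h + h)) \<in> {0..c}"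
      by (intro stayK[OF sol is_interval_cc]) (use h0 in auto)
    then show ?case unfolding xsS K_def by simp
  qed
  define gn where "gn n = S (real n * h) (xs n)" for n
  have gstart: "gn n (real n * h) = xs n" for n unfolding gn_def using S[OF xsK] by blast
  have gsol: "is_solution U F {real n * h..real n * h + h} (gn n)" for n
    unfolding gn_def using S[OF xsK] by blast
  have gnext: "gn n (real n * h + h) = gn (Suc n) (real (Suc n) * h)" for n
    using gstart[of "Suc n"] xsS[of n] unfolding gn_def by simp
  define phi where "phi t = gn (nat \<lfloor>t / h\<rfloor>) t" for t
  have agree: "phi t = gn n t" if t: "t \<in> {real n * h..real n * h + h}" for n t
  proof (cases "t < real n * h + h")
    case True
    then have "nat \<lfloor>t / h\<rfloor> = n" using t h0 by (intro floor_piece) (auto simp: algebra_simps)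
    then show ?thesis unfolding phi_def by simp
  next
    case False
    then have te: "t = real (Suc n) * h" using t by (auto simp: algebra_simps)
    have "nat \<lfloor>t / h\<rfloor> = Suc n" using te h0 by (intro floor_piece) (auto simp: algebra_simps)
    then have "phi t = gn (Suc n) (real (Suc n) * h)" unfolding phi_def te by simp
    also have "\<dots> = gn n t" using gnext[of n] te by (simp add: algebra_simps)
    finally show ?thesis .
  qed
  have dpiece: "(phi has_vector_derivative F (phi t)) (at t within {real n * h..real n * h + h})"
    if t: "t \<in> {real n * h..real n * h + h}" for n t
  proof -
    have "(gn n has_vector_derivative F (gn n t)) (at t within {real n * h..real n * h + h})"
      using gsol[of n] t unfolding is_solution_def by blast
    then have "(phi has_vector_derivative F (gn n t)) (at t within {real n * h..real n * h + h})"
      by (rule has_vector_derivative_transform[OF t agree, rotated])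
    then show ?thesis using agree[OF t] by simp
  qed
  have "phi 0 = x0" unfolding phi_def using gstart[of 0] xs0 by simp
  moreover have "is_solution U F {0..} phi"
    unfolding is_solution_def
  proof
    fix t :: real assume "t \<in> {0..}"
    then have t0: "t \<ge> 0" by simp
    define m where "m = nat \<lfloor>t / h\<rfloor>"
    have tm: "real m * h \<le> t" "t < real m * h + h" using piece_of[OF h0 t0] unfolding m_def by (auto simp: algebra_simps)
    have tW: "t \<in> {real m * h..real m * h + h}" using tm by auto
    have "phi t \<in> U" using agree[OF tW] gsol[of m] tW unfolding is_solution_def by auto
    moreover have "(phi has_vector_derivative F (phi t)) (at t within {0..})"
    proof (cases "m = 0")
      case True
      have "at t within {0..} = at t within {real m * h..real m * h + h}"
        by (rule at_within_nhd[of t "{-h<..<h}"]) (use tm True h0 in auto)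
      then show ?thesis using dpiece[OF tW] by simp
    next
      case False
      show ?thesis
      proof (cases "real m * h < t")
        case True
        have mh0: "0 \<le> real m * h" using h0 by simp
        have e: "at t within {0..} = at t within {a..a + h}" if "0 \<le> a" "a < t" "t < a + h" for a
          by (rule at_within_nhd[of t "{a<..<a + h}"]) (use that in auto)
        have "at t within {0..} = at t within {real m * h..real m * h + h}"
          by (rule e[OF mh0 True tm(2)])
        then show ?thesis using dpiece[OF tW] by simp
      next
        case nlt: False
        obtain k where mk: "m = Suc k" using False by (cases m) auto
        have te: "t = real k * h + h" using nlt tm mk by (simp add: algebra_simps)
        have tW': "t \<in> {real k * h..real k * h + h}" using te h0 by simp
        have d: "(phi has_vector_derivative F (phi t)) (at t within {real k * h..real k * h + h} \<union> {real m * h..real m * h + h})"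
          by (rule hvd_Un[OF dpiece[OF tW'] dpiece[OF tW]])
        have e: "at t within {0..} = at t within ({a..a + h} \<union> {a + h..a + h + h})"
          if "0 \<le> a" "t = a + h" for a
          by (rule at_within_nhd[of t "{a<..<a + h + h}"]) (use h0 that in auto)
        have kh0: "0 \<le> real k * h" using h0 by simp
        have mk': "real m * h = real k * h + h" using mk by (simp add: algebra_simps)
        have "at t within {0..} = at t within ({real k * h..real k * h + h} \<union> {real m * h..real m * h + h})"
          unfolding mk' by (rule e[OF kh0 te])
        then show ?thesis using d by simp
      qed
    qed
    ultimately show "phi t \<in> U \<and> (phi has_vector_derivative F (phi t)) (at t within {0..})" by blast
  qed
  ultimately show ?thesis by blast
qed

end

theorem theorem2:
  fixes U :: "(real^'n) set" and X :: "real^'n \<Rightarrow> real^'n" and V :: "real^'n \<Rightarrow> real" and c :: real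
  assumes "open U"
    and "smooth_on U X" and "smooth_on U V"
    and A1: "\<forall>x\<in>U. V x \<ge> 0" "{x\<in>U. V x = 0} \<noteq> {}" "\<forall>x\<in>U. grad V x \<bullet> X x = 0"
    and A2: "c > 0" "compact {x\<in>U. V x \<in> {0..c}}"
    and A3': "S_set U X V \<inter> {x\<in>U. V x \<in> {0..c}} \<subseteq> {x\<in>U. V x = 0}"
  shows "(\<forall>x0\<in>{x\<in>U. V x \<in> {0..c}}. \<exists>phi. phi 0 = x0 \<and> is_solution U (\<lambda>x. X x - grad V x) {0..} phi)
      \<and> (\<forall>phi T. is_solution U (\<lambda>x. X x - grad V x) {0..T} phi \<and> phi 0 \<in> {x\<in>U. V x \<in> {0..c}}
            \<longrightarrow> (\<forall>t\<in>{0..T}. phi t \<in> {x\<in>U. V x \<in> {0..c}}))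
      \<and> (\<forall>phi. is_solution U (\<lambda>x. X x - grad V x) {0..} phi \<and> phi 0 \<in> {x\<in>U. V x \<in> {0..c}}
            \<longrightarrow> (\<forall>t\<ge>0. phi t \<in> {x\<in>U. V x \<in> {0..c}})
              \<and> ((\<lambda>t. infdist (phi t) {x\<in>U. V x = 0}) \<longlongrightarrow> 0) at_top)
      \<and> invariant_set U X {x\<in>U. V x = 0}
      \<and> invariant_set U (\<lambda>x. X x - grad V x) {x\<in>U. V x = 0}"
proof -
  interpret sysc U X V c
  proof (unfold_locales)
    show "open U" by fact
    show "smooth_on U X" by fact
    show "smooth_on U V" by fact
    show "\<And>x. x \<in> U \<Longrightarrow> 0 \<le> V x" using A1(1) by blast
    show "\<And>x. x \<in> U \<Longrightarrow> grad V x \<bullet> X x = 0" using A1(3) by blast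
    show "c > 0" by (rule A2(1))
    show "compact {x\<in>U. V x \<in> {0..c}}" by (rule A2(2))
    show "S_set U X V \<inter> {x\<in>U. V x \<in> {0..c}} \<subseteq> {x\<in>U. V x = 0}" by (rule A3')
  qed
  have Feq: "(\<lambda>x. X x - grad V x) = F" by (simp add: F_def[abs_def])
  have KK: "{x\<in>U. V x \<in> {0..c}} = K" by (simp add: K_def)
  have p1: "\<forall>x0\<in>K. \<exists>phi. phi 0 = x0 \<and> is_solution U F {0..} phi"
    using global_exist by blast
  have p2: "\<forall>phi T. is_solution U F {0..T} phi \<and> phi 0 \<in> K \<longrightarrow> (\<forall>t\<in>{0..T}. phi t \<in> K)"
  proof (intro allI impI ballI)
    fix phi T t assume H: "is_solution U F {0..T} phi \<and> phi 0 \<in> K" and t: "t \<in> {0..T}"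
    have "phi t \<in> U \<and> V (phi t) \<in> {0..c}"
      by (rule stayK[where phi=phi and I="{0..T}" and a=0 and t=t]) (use H t in \<open>auto simp: K_def\<close>)
    then show "phi t \<in> K" by (simp add: K_def)
  qed
  have p3: "\<forall>phi. is_solution U F {0..} phi \<and> phi 0 \<in> K
            \<longrightarrow> (\<forall>t\<ge>0. phi t \<in> K) \<and> ((\<lambda>t. infdist (phi t) {x\<in>U. V x = 0}) \<longlongrightarrow> 0) at_top"
  proof (intro allI impI)
    fix phi assume H: "is_solution U F {0..} phi \<and> phi 0 \<in> K"
    interpret traj U X V c phi
      by unfold_locales (use H in auto)
    show "(\<forall>t\<ge>0. phi t \<in> K) \<and> ((\<lambda>t. infdist (phi t) {x\<in>U. V x = 0}) \<longlongrightarrow> 0) at_top"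
      using inK infdist_lim by blast
  qed
  show ?thesis unfolding Feq KK using p1 p2 p3 inv_X inv_F by blast
qed

end
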